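(* Let $D\ge 2$ be an integer. For all sufficiently large $n$ the following holds. Let $1\le t\le n$, let $\Gamma\sim\Gamma(n,D)$ be the random block model with vertex set $W$, and let $\mathcal{B}$ be a (fixed) well-behaved multiset of $t$ subsets of $W$. Fix $1\le k\le N$ and any vertex $u\in W_k\setminus\bigcup\mathcal{B}$, and let $\mathcal{E}$ be the event that there exists $B\in\mathcal{B}$ such that $u\in N_\Gamma(B)$. Then \[\Pr(\mathcal{E})\ge \min\Big\{\frac14,\; t\,n^{D^{1-k}-1}(\log n)^2(\log\log n)^D\Big\}.\]
   Context: Random block model $\Gamma(n,D)$ (for integers $D\ge 2$, $n$; $\log$ is the natural logarithm; rounding to integers is ignored). Let $N$ be the smallest integer with $n^{D^{1-N}}\le 3^{D^2}$. For $1\le i,k\le N$ let \[p_{i,k}=\min\big\{n^{-D^{-1}+D^{-i}+D^{-k}}(\log n)^{2/D}(\log\log n)^3,\,1\big\},\qquad \Delta_i=n^{D^{1-i}}.\] The vertex set is $W=W_1\,\dot\cup\cdots\dot\cup\, W_N$ with pairwise disjoint blocks of sizes $|W_k|=100\cdot 3^D n^{1-D^{-k}}$. For each pair of distinct vertices $u\in W_i$, $v\in W_k$ (possibly $i=k$), $uv$ is an edge independently with probability $p_{i,k}$. Each block $W_k$ is partitioned into sub-blocks $W_{k,1}$ of size $\frac12|W_k|$ and $W_{k,2},\dots,W_{k,\log n}$, each of size at least $\frac{1}{2\log n}|W_k|$. Well-behaved: for $1\le t\le n$, a multiset $\mathcal{B}=\{B_i\}_{i=1}^t$ with each $B_i\subseteq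 W$ is well-behaved if (NB1) $|B_i|\le D$ for all $i$; (NB2) for all $1\le k\le N$ and all $u\in W_k$, $|\{i\in[t]: u\in B_i\}|\le \Delta_k$; (NB3) for each $1\le k\le N$ and $1\le j\le \log n$, $|\bigcup\mathcal{B}\cap W_{k,j}|\le\frac12|W_{k,j}|$. Here $\bigcup\mathcal{B}=\bigcup_i B_i$. $N_\Gamma(B)$ denotes the common neighbourhood of $B$ in $\Gamma$ (the set of vertices adjacent to every vertex of $B$), with $N_\Gamma(\emptyset)$ being all vertices. *)

theory Defs
  imports "HOL-Probability.Probability" "HOL-Library.Multiset"
begin

type_synonym vtx = "nat \<times> nat"   (* (block index k, position within block) *)

definition numBlocks :: "nat \<Rightarrow> nat \<Rightarrow> nat" where
  "numBlocks n D = (LEAST N::nat. real n powr (real D powr (1 - real N)) \<le> 3 ^ (D^2))"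

definition edgeP :: "nat \<Rightarrow> nat \<Rightarrow> nat \<Rightarrow> nat \<Rightarrow> real" where
  "edgeP n D i k = min (real n powr (- 1 / real D + real D powr (- real i) + real D powr (- real k))
      * ln (real n) powr (2 / real D) * (ln (ln (real n)))^3) 1"

definition Delta :: "nat \<Rightarrow> nat \<Rightarrow> nat \<Rightarrow> real" where
  "Delta n D i = real n powr (real D powr (1 - real i))"

definition blockSize :: "nat \<Rightarrow> nat \<Rightarrow> nat \<Rightarrow> nat" where
  "blockSize n D k = nat \<lceil>100 * 3 ^ D * real n powr (1 - real D powr (- real k))\<rceil>"

definition Wset :: "nat \<Rightarrow> nat \<Rightarrow> vtx set" where
  "Wset n D = {(k, j). 1 \<le> k \<and> k \<le> numBlocks n D \<and> j < blockSize n D k}"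

definition block :: "nat \<Rightarrow> nat \<Rightarrow> nat \<Rightarrow> vtx set" where
  "block n D k = {v \<in> Wset n D. fst v = k}"

definition potEdges :: "nat \<Rightarrow> nat \<Rightarrow> vtx set set" where
  "potEdges n D = {{x, y} | x y. x \<in> Wset n D \<and> y \<in> Wset n D \<and> x \<noteq> y}"

definition edgeProb :: "nat \<Rightarrow> nat \<Rightarrow> vtx set \<Rightarrow> real" where
  "edgeProb n D e = edgeP n D (Min (fst ` e)) (Max (fst ` e))"

definition blockModel :: "nat \<Rightarrow> nat \<Rightarrow> (vtx set \<Rightarrow> bool) pmf" where
  "blockModel n D = Pi_pmf (potEdges n D) False (\<lambda>e. bernoulli_pmf (edgeProb n D e))"

definition adj :: "(vtx set \<Rightarrow> bool) \<Rightarrow> vtx \<Rightarrow> vtx \<Rightarrow> bool" where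
  "adj \<Gamma> u v = (u \<noteq> v \<and> \<Gamma> {u, v})"

(* common neighbourhood N_Gamma(B); N_Gamma({}) = W *)
definition commonNbr :: "nat \<Rightarrow> nat \<Rightarrow> (vtx set \<Rightarrow> bool) \<Rightarrow> vtx set \<Rightarrow> vtx set" where
  "commonNbr n D \<Gamma> B = {v \<in> Wset n D. \<forall>b\<in>B. adj \<Gamma> b v}"

definition numSub :: "nat \<Rightarrow> nat" where
  "numSub n = nat \<lfloor>ln (real n)\<rfloor>"

definition subBlock :: "nat \<Rightarrow> nat \<Rightarrow> (vtx \<Rightarrow> nat) \<Rightarrow> nat \<Rightarrow> nat \<Rightarrow> vtx set" where
  "subBlock n D sb k j = {v \<in> block n D k. sb v = j}"

definition validPartition :: "nat \<Rightarrow> nat \<Rightarrow> (vtx \<Rightarrow> nat) \<Rightarrow> bool" where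
  "validPartition n D sb \<longleftrightarrow>
     (\<forall>v \<in> Wset n D. 1 \<le> sb v \<and> sb v \<le> numSub n) \<and>
     (\<forall>k. 1 \<le> k \<and> k \<le> numBlocks n D \<longrightarrow>
        card (subBlock n D sb k 1) = blockSize n D k div 2 \<and>
        (\<forall>j. 2 \<le> j \<and> j \<le> numSub n \<longrightarrow>
           real (card (subBlock n D sb k j)) \<ge> real (blockSize n D k) / (2 * ln (real n))))"

definition wellBehaved :: "nat \<Rightarrow> nat \<Rightarrow> (vtx \<Rightarrow> nat) \<Rightarrow> vtx set multiset \<Rightarrow> bool" where
  "wellBehaved n D sb \<B> \<longleftrightarrow>
     1 \<le> size \<B> \<and> size \<B> \<le> n \<and>
     (\<forall>B \<in># \<B>. B \<subseteq> Wset n D) \<and>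
     (\<forall>B \<in># \<B>. card B \<le> D) \<and>
     (\<forall>k. 1 \<le> k \<and> k \<le> numBlocks n D \<longrightarrow> (\<forall>u \<in> block n D k.
        real (size (filter_mset (\<lambda>B. u \<in> B) \<B>)) \<le> Delta n D k)) \<and>
     (\<forall>k j. 1 \<le> k \<and> k \<le> numBlocks n D \<and> 1 \<le> j \<and> j \<le> numSub n \<longrightarrow>
        real (card (\<Union>(set_mset \<B>) \<inter> subBlock n D sb k j))
          \<le> real (card (subBlock n D sb k j)) / 2)"

end

theory Submission
  imports Defs
begin


lemma pz:
  fixes M :: "'a pmf" and A :: "nat \<Rightarrow> 'a set" and c :: "nat \<Rightarrow> real"
  assumes mu: "(\<Sum>j<t. c j * measure_pmf.prob M (A j)) > 0"
  shows "(\<Sum>j<t. c j * measure_pmf.prob M (A j))^2 \<le>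
     measure_pmf.prob M (\<Union>j<t. A j) * (\<Sum>j<t. \<Sum>j'<t. c j * c j' * measure_pmf.prob M (A j \<inter> A j'))"
proof -
  define U where "U = (\<Union>j<t. A j)"
  define \<mu> where "\<mu> = (\<Sum>j<t. c j * measure_pmf.prob M (A j))"
  define S where "S = (\<Sum>j<t. \<Sum>j'<t. c j * c j' * measure_pmf.prob M (A j \<inter> A j'))"
  define P where "P = measure_pmf.prob M U"
  have int: "integrable (measure_pmf M) (indicator X :: 'a \<Rightarrow> real)" for X
    by (simp add: integrable_indicator_iff measure_pmf.emeasure_finite less_top[symmetric])
  have key: "0 \<le> S - 2 * a * \<mu> + a^2 * P" for a
  proof -
    define Z where "Z = (\<lambda>x. \<Sum>j<t. c j * indicator (A j) x :: real)"
    have pw: "(Z x - a * indicator U x)^2 =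
       (\<Sum>j<t. \<Sum>j'<t. c j * c j' * indicator (A j \<inter> A j') x) - 2 * a * (\<Sum>j<t. c j * indicator (A j) x)
        + a^2 * indicator U x" for x
    proof (cases "x \<in> U")
      case True
      have "(Z x)^2 = (\<Sum>j<t. \<Sum>j'<t. c j * c j' * indicator (A j \<inter> A j') x)"
        unfolding Z_def power2_eq_square sum_product
        by (intro sum.cong refl) (simp add: indicator_def)
      then show ?thesis using True by (simp add: power2_eq_square Z_def algebra_simps)
    next
      case False
      then have "\<forall>j<t. x \<notin> A j" by (auto simp: U_def)
      then have z: "\<And>j. j < t \<Longrightarrow> indicator (A j) x = (0::real)" by simp
      have z2: "\<And>j j'. j < t \<Longrightarrow> indicator (A j \<inter> A j') x = (0::real)" by (simp add: z indicator_inter_arith)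
      have Z0: "Z x = 0" unfolding Z_def by (intro sum.neutral) (simp add: z)
      have S0: "(\<Sum>j<t. \<Sum>j'<t. c j * c j' * indicator (A j \<inter> A j') x) = (0::real)"
        by (intro sum.neutral) (simp add: z2)
      have Zx: "(\<Sum>j<t. c j * indicator (A j) x) = Z x" by (simp only: Z_def)
      have iU: "indicator U x = (0::real)" using False by simp
      show ?thesis by (simp only: Zx Z0 S0 iU) simp
    qed
    have "0 \<le> integral\<^sup>L M (\<lambda>x. (Z x - a * indicator U x)^2)" by simp
    also have "\<dots> = integral\<^sup>L M (\<lambda>x. (\<Sum>j<t. \<Sum>j'<t. c j * c j' * indicator (A j \<inter> A j') x) - 2 * a * (\<Sum>j<t. c j * indicator (A j) x)
        + a^2 * indicator U x)" by (simp add: pw)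
    also have "\<dots> = S - 2 * a * \<mu> + a^2 * P"
    proof -
      define F where "F = (\<lambda>x. (\<Sum>j<t. \<Sum>j'<t. c j * c j' * indicator (A j \<inter> A j') x) :: real)"
      define G where "G = (\<lambda>x. 2 * a * (\<Sum>j<t. c j * indicator (A j) x) :: real)"
      define H where "H = (\<lambda>x. a^2 * indicator U x :: real)"
      have iF: "integrable M F" unfolding F_def by (intro Bochner_Integration.integrable_sum integrable_mult_right int)
      have iG: "integrable M G" unfolding G_def by (intro Bochner_Integration.integrable_sum integrable_mult_right int)
      have iH: "integrable M H" unfolding H_def by (intro Bochner_Integration.integrable_sum integrable_mult_right int)
      have eF: "integral\<^sup>L M F = S"
      proof -
        have "integral\<^sup>L M F = (\<Sum>j<t. integral\<^sup>L M (\<lambda>x. \<Sum>j'<t. c j * c j' * indicator (A j \<inter> A j') x))"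
          unfolding F_def by (rule Bochner_Integration.integral_sum) (intro Bochner_Integration.integrable_sum integrable_mult_right int)
        also have "\<dots> = (\<Sum>j<t. \<Sum>j'<t. integral\<^sup>L M (\<lambda>x. c j * c j' * indicator (A j \<inter> A j') x))"
          by (intro sum.cong refl Bochner_Integration.integral_sum) (intro Bochner_Integration.integrable_sum integrable_mult_right int)
        also have "\<dots> = S" unfolding S_def
          by (intro sum.cong refl) (simp only: integral_mult_right_zero integral_indicator, simp)
        finally show ?thesis .
      qed
      have eG: "integral\<^sup>L M G = 2 * a * \<mu>"
      proof -
        have "integral\<^sup>L M G = 2 * a * integral\<^sup>L M (\<lambda>x. \<Sum>j<t. c j * indicator (A j) x)"
          unfolding G_def by (rule integral_mult_right_zero)
        also have "integral\<^sup>L M (\<lambda>x. \<Sum>j<t. c j * indicator (A j) x) = (\<Sum>j<t. integral\<^sup>L M (\<lambda>x. c j * indicator (A j) x))"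
          by (intro Bochner_Integration.integral_sum) (intro Bochner_Integration.integrable_sum integrable_mult_right int)
        also have "\<dots> = \<mu>" unfolding \<mu>_def
          by (intro sum.cong refl) (simp only: integral_mult_right_zero integral_indicator, simp)
        finally show ?thesis .
      qed
      have eH: "integral\<^sup>L M H = a^2 * P"
        unfolding H_def P_def by (simp only: integral_mult_right_zero integral_indicator, simp)
      have "integral\<^sup>L M (\<lambda>x. F x - G x + H x) = S - 2 * a * \<mu> + a^2 * P"
        using iF iG iH eF eG eH by (simp add: integral_add integral_diff)
      then show ?thesis by (simp only: F_def G_def H_def)
    qed
    finally show ?thesis .
  qed
  have "P > 0"
  proof (rule ccontr)
    assume "\<not> P > 0"
    then have "P = 0" using measure_nonneg[of M U] by (simp add: P_def)
    from key[of "(S+1)/(2*\<mu>)"] this mu show False by (simp add: \<mu>_def field_simps)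
  qed
  from key[of "\<mu>/P"] this have "\<mu>^2 \<le> P * S"
    by (simp add: field_simps power2_eq_square)
  then show ?thesis by (simp add: \<mu>_def S_def P_def U_def)
qed


lemma finite_Wset: "finite (Wset n D)"
proof -
  have "Wset n D \<subseteq> (\<Union>k\<in>{1..numBlocks n D}. {k} \<times> {..<blockSize n D k})"
    by (auto simp: Wset_def)
  then show ?thesis by (rule finite_subset) auto
qed

lemma finite_potEdges: "finite (potEdges n D)"
proof -
  have "potEdges n D \<subseteq> Pow (Wset n D)" by (auto simp: potEdges_def)
  then show ?thesis using finite_Wset by (rule finite_subset[OF _ finite_Pow_iff[THEN iffD2]])
qed

lemma edgeP_sym: "edgeP n D i k = edgeP n D k i"
proof -
  have "- 1 / real D + real D powr (- real i) + real D powr (- real k) = - 1 / real D + real D powr (- real k) + real D powr (- real i)" by simp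
  then show ?thesis unfolding edgeP_def by metis
qed

lemma edgeProb_pair: "edgeProb n D {b, u} = edgeP n D (fst u) (fst b)"
proof (cases "fst b \<le> fst u")
  case True
  then show ?thesis by (simp add: edgeProb_def min_def max_def edgeP_sym)
next
  case False
  then show ?thesis by (simp add: edgeProb_def min_def max_def)
qed

lemma prob_all_edges:
  assumes F: "F \<subseteq> potEdges n D" and p01: "\<And>e. e \<in> F \<Longrightarrow> 0 \<le> edgeProb n D e \<and> edgeProb n D e \<le> 1"
  shows "measure_pmf.prob (blockModel n D) {\<Gamma>. \<forall>e\<in>F. \<Gamma> e} = (\<Prod>e\<in>F. edgeProb n D e)"
proof -
  define A where "A = potEdges n D"
  have finA: "finite A" by (simp add: A_def finite_potEdges)
  have finF: "finite F" using F finA A_def finite_subset by blast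
  define B where "B = (\<lambda>e. if e \<in> F then {True} else (UNIV :: bool set))"
  have eq: "{\<Gamma>. \<forall>e\<in>F. \<Gamma> e} = Pi A B"
    using F by (auto simp: B_def A_def Pi_def)
  have "measure_pmf.prob (blockModel n D) {\<Gamma>. \<forall>e\<in>F. \<Gamma> e}
      = (\<Prod>e\<in>A. measure_pmf.prob (bernoulli_pmf (edgeProb n D e)) (B e))"
    unfolding eq blockModel_def A_def by (rule measure_Pi_pmf_Pi) (simp add: finite_potEdges)
  also have "\<dots> = (\<Prod>e\<in>A. if e \<in> F then edgeProb n D e else 1)"
    by (intro prod.cong refl) (auto simp: B_def measure_pmf_single p01)
  also have "\<dots> = (\<Prod>e\<in>F. edgeProb n D e)"
    using F finA by (simp add: prod.If_cases A_def Int_absorb1)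
  finally show ?thesis .
qed

lemma prob_vertices:
  assumes u: "u \<in> Wset n D" and S: "S \<subseteq> Wset n D" and uS: "u \<notin> S"
    and p01: "\<And>i. 0 \<le> edgeP n D (fst u) i \<and> edgeP n D (fst u) i \<le> 1"
  shows "measure_pmf.prob (blockModel n D) {\<Gamma>. \<forall>b\<in>S. \<Gamma> {b, u}} = (\<Prod>b\<in>S. edgeP n D (fst u) (fst b))"
proof -
  define F where "F = (\<lambda>b. {b, u}) ` S"
  have inj: "inj_on (\<lambda>b. {b, u}) S"
    using uS by (auto simp: inj_on_def doubleton_eq_iff)
  have FP: "F \<subseteq> potEdges n D"
  proof
    fix e assume "e \<in> F"
    then obtain b where "b \<in> S" "e = {b, u}" by (auto simp: F_def)
    then show "e \<in> potEdges n D" using u S uS unfolding potEdges_def by blast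
  qed
  have ev: "{\<Gamma>. \<forall>b\<in>S. \<Gamma> {b, u}} = {\<Gamma>. \<forall>e\<in>F. \<Gamma> e}" by (auto simp: F_def)
  have "measure_pmf.prob (blockModel n D) {\<Gamma>. \<forall>e\<in>F. \<Gamma> e} = (\<Prod>e\<in>F. edgeProb n D e)"
    by (rule prob_all_edges[OF FP]) (auto simp: F_def edgeProb_pair p01)
  also have "\<dots> = (\<Prod>b\<in>S. edgeProb n D {b, u})"
    unfolding F_def by (rule prod.reindex[OF inj, unfolded comp_def])
  also have "\<dots> = (\<Prod>b\<in>S. edgeP n D (fst u) (fst b))" by (simp add: edgeProb_pair)
  finally show ?thesis using ev by simp
qed



lemma pair_bound:
  fixes x Dl :: "'v \<Rightarrow> real" and y :: real and D :: nat and C :: "'v set"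
  assumes xpos: "\<And>v. x v > 0" and ypos: "y > 0"
    and rel: "\<And>v. x v < 1 \<Longrightarrow> y^D * Dl v \<le> x v ^ D"
    and Dpos: "\<And>v. Dl v > 0" and fin: "finite C" and card: "card C \<le> D"
  shows "y^D / (\<Prod>v\<in>C. min (x v) 1) \<le> y^D + (\<Sum>v\<in>C. 1 / Dl v)"
proof -
  define T where "T = {v\<in>C. x v < 1}"
  have finT: "finite T" using fin by (simp add: T_def)
  have cardT: "card T \<le> D" using card card_mono[OF fin, of T] by (auto simp: T_def)
  have prodT: "(\<Prod>v\<in>C. min (x v) 1) = (\<Prod>v\<in>T. x v)"
  proof -
    have "(\<Prod>v\<in>C. min (x v) 1) = (\<Prod>v\<in>T. min (x v) 1)"
      by (rule prod.mono_neutral_right[OF fin]) (auto simp: T_def)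
    also have "\<dots> = (\<Prod>v\<in>T. x v)" by (intro prod.cong) (auto simp: T_def)
    finally show ?thesis .
  qed
  have sumnn: "0 \<le> (\<Sum>v\<in>C. 1 / Dl v)" by (intro sum_nonneg) (simp add: less_imp_le[OF Dpos])
  show ?thesis
  proof (cases "T = {}")
    case True
    then show ?thesis using prodT sumnn by simp
  next
    case False
    obtain w where w: "w \<in> T" "\<And>v. v \<in> T \<Longrightarrow> x w \<le> x v"
    proof -
      have "Min (x ` T) \<in> x ` T" using finT False by (intro Min_in) auto
      then obtain w where "w \<in> T" "x w = Min (x ` T)" by auto
      moreover have "\<And>v. v \<in> T \<Longrightarrow> Min (x ` T) \<le> x v" using finT by (intro Min_le) auto
      ultimately show ?thesis using that by metis
    qed
    have xw: "0 < x w" "x w < 1" using w xpos by (auto simp: T_def)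
    have "x w ^ D \<le> x w ^ card T"
      using xw cardT by (intro power_decreasing) auto
    also have "x w ^ card T = (\<Prod>v\<in>T. x w)" by simp
    also have "\<dots> \<le> (\<Prod>v\<in>T. x v)"
      by (intro prod_mono) (use w xw in auto)
    finally have le: "x w ^ D \<le> (\<Prod>v\<in>C. min (x v) 1)" using prodT by simp
    have ppos: "0 < (\<Prod>v\<in>C. min (x v) 1)" by (intro prod_pos) (simp add: xpos)
    have "y^D / (\<Prod>v\<in>C. min (x v) 1) \<le> y^D / x w ^ D"
      using le xw ypos ppos by (intro divide_left_mono) auto
    also have "\<dots> \<le> 1 / Dl w"
      using rel[of w] xw Dpos[of w] by (simp add: field_simps)
    also have "\<dots> \<le> (\<Sum>v\<in>C. 1 / Dl v)"
      using w(1) fin by (intro member_le_sum) (auto simp: T_def less_imp_le[OF Dpos])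
    finally show ?thesis using ypos zero_le_power[of y D] by linarith
  qed
qed


lemma Delta_eq:
  assumes "n > 0" "D > 0"
  shows "(real n powr (real D powr (- real i)))^D = Delta n D i"
proof -
  have "(real n powr (real D powr (- real i)))^D = real n powr (real D * real D powr (- real i))"
    using assms by (simp add: powr_power)
  also have "real D * real D powr (- real i) = real D powr (1 - real i)"
    using assms by (simp add: powr_diff powr_minus divide_inverse)
  finally show ?thesis by (simp add: Delta_def)
qed

lemma y_pow:
  assumes "n > 1" "D > 0"
  shows "(real n powr (- 1 / real D + real D powr (- real k)) * ln (real n) powr (2 / real D) * l ^ 3)^D
     = real n powr (real D powr (1 - real k) - 1) * (ln (real n))^2 * l^(3*D)"
proof -
  have lnpos: "ln (real n) > 0" using assms by simp
  have e1: "(real n powr (- 1 / real D + real D powr (- real k)))^D = real n powr (real D powr (1 - real k) - 1)"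
  proof -
    have "(real n powr (- 1 / real D + real D powr (- real k)))^D = real n powr (real D * (- 1 / real D + real D powr (- real k)))"
      using assms by (simp add: powr_power)
    also have "real D * (- 1 / real D + real D powr (- real k)) = real D powr (1 - real k) - 1"
      using assms by (simp add: powr_diff powr_minus divide_inverse algebra_simps)
    finally show ?thesis .
  qed
  have e2: "(ln (real n) powr (2 / real D))^D = (ln (real n))^2"
  proof -
    have "(ln (real n) powr (2 / real D))^D = ln (real n) powr (real D * (2 / real D))"
      using lnpos by (simp add: powr_power)
    also have "\<dots> = ln (real n) powr (real (2::nat))" using assms by simp
    also have "\<dots> = (ln (real n))^2" using lnpos by (rule powr_realpow)
    finally show ?thesis .
  qed
  show ?thesis
    by (simp only: power_mult_distrib e1 e2 power_mult[symmetric] mult.commute[of 3 D])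
qed

lemma main:
  assumes D2: "D \<ge> 2" and nbig: "real n \<ge> exp (exp (2 * real D))"
    and t1: "1 \<le> t" and sz: "size \<B> = t" and wb: "wellBehaved n D sb \<B>"
    and k1: "1 \<le> k" and kN: "k \<le> numBlocks n D"
    and uk: "u \<in> block n D k" and uB: "u \<notin> \<Union>(set_mset \<B>)"
  shows "measure_pmf.prob (blockModel n D) {\<Gamma>. \<exists>B \<in># \<B>. u \<in> commonNbr n D \<Gamma> B}
       \<ge> min (1/4) (real t * real n powr (real D powr (1 - real k) - 1)
                     * (ln (real n))^2 * (ln (ln (real n)))^D)"
proof -
  define l where "l = ln (ln (real n))"
  have Dpos: "D > 0" using D2 by simp
  have e1: "exp (2 * real D) > 1" using Dpos by simp
  have lnn: "ln (real n) \<ge> exp (2 * real D)"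
  proof -
    have "0 < exp (exp (2 * real D))" by simp
    then have "0 < real n" using nbig by linarith
    then have "ln (exp (exp (2 * real D))) \<le> ln (real n)" using nbig by (subst ln_le_cancel_iff) auto
    then show ?thesis by simp
  qed
  have lnn1: "ln (real n) > 1" using lnn e1 by linarith
  have n1: "n > 1"
  proof (rule ccontr)
    assume "\<not> n > 1" then have "real n \<le> 1" by simp
    then have "ln (real n) \<le> 0" by (cases "n = 0") auto
    then show False using lnn1 by simp
  qed
  have l2D: "l \<ge> 2 * real D"
  proof -
    have "ln (exp (2 * real D)) \<le> ln (ln (real n))" using lnn lnn1 by (subst ln_le_cancel_iff) auto
    then show ?thesis by (simp add: l_def)
  qed
  have lpos: "l > 0" using l2D Dpos by simp
  obtain xs where xs: "mset xs = \<B>" using ex_mset by blast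
  have lenxs: "length xs = t" using xs sz by auto
  define B where "B = (\<lambda>j. xs ! j)"
  have Bin: "j < t \<Longrightarrow> B j \<in># \<B>" for j using xs lenxs by (auto simp: B_def)
  have BW: "j < t \<Longrightarrow> B j \<subseteq> Wset n D" for j using Bin wb by (auto simp: wellBehaved_def)
  have Bcard: "j < t \<Longrightarrow> card (B j) \<le> D" for j using Bin wb by (auto simp: wellBehaved_def)
  have Bfin: "finite (B j)" if "j < t" for j using BW[OF that] finite_Wset finite_subset by blast
  have uBj: "j < t \<Longrightarrow> u \<notin> B j" for j using Bin uB by auto
  have uW: "u \<in> Wset n D" and fu: "fst u = k" using uk by (auto simp: block_def)
  define L where "L = ln (real n) powr (2 / real D) * l ^ 3"
  have Lpos: "L > 0" using lpos lnn1 by (simp add: L_def)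
  define x where "x = (\<lambda>i::nat. real n powr (- 1 / real D + real D powr (- real k) + real D powr (- real i)) * L)"
  define y where "y = real n powr (- 1 / real D + real D powr (- real k)) * L"
  have xpos: "x i > 0" for i using Lpos n1 by (simp add: x_def)
  have ypos: "y > 0" using Lpos n1 by (simp add: y_def)
  have edgeP_eq: "edgeP n D k i = min (x i) 1" for i
    by (simp add: edgeP_def x_def L_def l_def mult.assoc)
  have p01: "0 \<le> edgeP n D (fst u) i \<and> edgeP n D (fst u) i \<le> 1" for i
    using xpos[of i] by (simp add: fu edgeP_eq)
  have rel: "y^D * Delta n D i \<le> x i ^ D" for i
  proof -
    have "x i = y * real n powr (real D powr (- real i))"
      by (simp add: x_def y_def powr_add)
    then have "x i ^ D = y^D * (real n powr (real D powr (- real i)))^D"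
      by (simp add: power_mult_distrib)
    then show ?thesis using Delta_eq[of n D i] n1 Dpos by simp
  qed
  have Deltapos: "Delta n D i > 0" for i using n1 by (simp add: Delta_def)
  define q where "q = (\<lambda>v::vtx. min (x (fst v)) 1)"
  define Q where "Q = (\<lambda>S. \<Prod>v\<in>S. q v)"
  have Qpos: "Q S > 0" for S by (simp add: Q_def q_def prod_pos xpos)
  define A where "A = (\<lambda>j. {\<Gamma>::vtx set \<Rightarrow> bool. \<forall>b\<in>B j. \<Gamma> {b, u}})"
  have PA: "measure_pmf.prob (blockModel n D) (A j) = Q (B j)" if "j < t" for j
    unfolding A_def Q_def q_def
    using prob_vertices[OF uW BW[OF that] uBj[OF that] p01] by (simp add: fu edgeP_eq)
  have PAA: "measure_pmf.prob (blockModel n D) (A j \<inter> A j') = Q (B j \<union> B j')" if "j < t" "j' < t" for j j'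
  proof -
    have "A j \<inter> A j' = {\<Gamma>. \<forall>b\<in>B j \<union> B j'. \<Gamma> {b, u}}" by (auto simp: A_def)
    then show ?thesis unfolding Q_def q_def
      using prob_vertices[OF uW _ _ p01, of "B j \<union> B j'"] BW that uBj by (simp add: fu edgeP_eq)
  qed
  have ev: "{\<Gamma>. \<exists>B \<in># \<B>. u \<in> commonNbr n D \<Gamma> B} = (\<Union>j<t. A j)"
  proof
    show "{\<Gamma>. \<exists>B \<in># \<B>. u \<in> commonNbr n D \<Gamma> B} \<subseteq> (\<Union>j<t. A j)"
    proof
      fix \<Gamma> assume "\<Gamma> \<in> {\<Gamma>. \<exists>B \<in># \<B>. u \<in> commonNbr n D \<Gamma> B}"
      then obtain Bb where Bb: "Bb \<in># \<B>" "u \<in> commonNbr n D \<Gamma> Bb" by auto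
      then have "Bb \<in> set xs" using xs by auto
      then obtain j where j: "j < t" "B j = Bb" using lenxs by (auto simp: in_set_conv_nth B_def)
      have "\<Gamma> \<in> A j" using Bb(2) j(2) by (auto simp: A_def commonNbr_def adj_def insert_commute)
      then show "\<Gamma> \<in> (\<Union>j<t. A j)" using j by auto
    qed
  next
    show "(\<Union>j<t. A j) \<subseteq> {\<Gamma>. \<exists>B \<in># \<B>. u \<in> commonNbr n D \<Gamma> B}"
    proof
      fix \<Gamma> assume "\<Gamma> \<in> (\<Union>j<t. A j)"
      then obtain j where j: "j < t" "\<Gamma> \<in> A j" by auto
      have "u \<in> commonNbr n D \<Gamma> (B j)"
        using j uW uBj[OF j(1)] by (auto simp: A_def commonNbr_def adj_def insert_commute)
      then show "\<Gamma> \<in> {\<Gamma>. \<exists>B \<in># \<B>. u \<in> commonNbr n D \<Gamma> B}" using Bin[OF j(1)] by auto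
    qed
  qed
  define c where "c = (\<lambda>j. y^D / Q (B j))"
  define \<mu> where "\<mu> = real t * y^D"
  have mu_eq: "(\<Sum>j<t. c j * measure_pmf.prob (blockModel n D) (A j)) = \<mu>"
  proof -
    have "(\<Sum>j<t. c j * measure_pmf.prob (blockModel n D) (A j)) = (\<Sum>j<t. y^D)"
      by (intro sum.cong refl) (simp add: PA c_def less_imp_neq[OF Qpos, symmetric])
    then show ?thesis by (simp add: \<mu>_def)
  qed
  have mupos: "\<mu> > 0" using t1 ypos by (simp add: \<mu>_def)
  have pair: "c j * c j' * measure_pmf.prob (blockModel n D) (A j \<inter> A j') = y^D * (y^D / Q (B j \<inter> B j'))"
    if "j < t" "j' < t" for j j'
  proof -
    have ui: "Q (B j \<union> B j') * Q (B j \<inter> B j') = Q (B j) * Q (B j')"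
      unfolding Q_def using Bfin that by (intro prod.union_inter) auto
    have "Q (B j \<union> B j') = Q (B j) * Q (B j') / Q (B j \<inter> B j')"
      using ui Qpos[of "B j \<inter> B j'"] by (simp add: eq_divide_eq)
    then show ?thesis using PAA[OF that] Qpos[of "B j"] Qpos[of "B j'"] Qpos[of "B j \<inter> B j'"]
      by (simp add: c_def field_simps)
  qed
  have pb: "y^D / Q (B j \<inter> B j') \<le> y^D + (\<Sum>w\<in>B j \<inter> B j'. 1 / Delta n D (fst w))"
    if "j < t" "j' < t" for j j'
  proof -
    have "card (B j \<inter> B j') \<le> D"
      using card_mono[OF Bfin[OF that(1)], of "B j \<inter> B j'"] Bcard[OF that(1)] by auto
    then show ?thesis
      unfolding Q_def q_def
      using pair_bound[of "\<lambda>v. x (fst v)" y D "\<lambda>v. Delta n D (fst v)" "B j \<inter> B j'"]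
        xpos ypos rel Deltapos Bfin[OF that(1)] by auto
  qed
  have cnt: "(\<Sum>j'<t. \<Sum>w\<in>B j \<inter> B j'. 1 / Delta n D (fst w)) \<le> real D" if j: "j < t" for j
  proof -
    define f where "f = (\<lambda>w::vtx. 1 / Delta n D (fst w))"
    have "(\<Sum>j'<t. \<Sum>w\<in>B j \<inter> B j'. f w) = (\<Sum>j'<t. \<Sum>w\<in>B j. if w \<in> B j' then f w else 0)"
      by (intro sum.cong refl sum.inter_restrict Bfin[OF j])
    also have "\<dots> = (\<Sum>w\<in>B j. \<Sum>j'<t. if w \<in> B j' then f w else 0)"
      by (rule sum.swap)
    also have "\<dots> \<le> (\<Sum>w\<in>B j. 1)"
    proof (intro sum_mono)
      fix w assume w: "w \<in> B j"
      have wW: "w \<in> Wset n D" using w BW[OF j] by auto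
      then have wk: "1 \<le> fst w" "fst w \<le> numBlocks n D" "w \<in> block n D (fst w)"
        by (auto simp: Wset_def block_def)
      have "(\<Sum>j'<t. if w \<in> B j' then f w else 0) = (\<Sum>j'\<in>{j'\<in>{..<t}. w \<in> B j'}. f w)"
        by (rule sum.inter_filter[symmetric]) simp
      also have "\<dots> = real (card {j'\<in>{..<t}. w \<in> B j'}) * f w" by simp
      also have "card {j'\<in>{..<t}. w \<in> B j'} = size (filter_mset (\<lambda>X. w \<in> X) \<B>)"
      proof -
        have "size (filter_mset (\<lambda>X. w \<in> X) \<B>) = length (filter (\<lambda>X. w \<in> X) xs)"
          by (simp only: xs[symmetric] mset_filter[symmetric] size_mset)
        also have "\<dots> = card {i. i < length xs \<and> w \<in> xs ! i}" by (rule length_filter_conv_card)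
        moreover have "{j'\<in>{..<t}. w \<in> B j'} = {i. i < length xs \<and> w \<in> xs ! i}"
          using lenxs by (auto simp: B_def)
        ultimately show ?thesis by simp
      qed
      also have "real (size (filter_mset (\<lambda>X. w \<in> X) \<B>)) * f w \<le> Delta n D (fst w) * f w"
        using wb wk by (intro mult_right_mono) (auto simp: wellBehaved_def f_def less_imp_le[OF Deltapos])
      also have "\<dots> = 1" using Deltapos[of "fst w"] by (simp add: f_def)
      finally show "(\<Sum>j'<t. if w \<in> B j' then f w else 0) \<le> 1" .
    qed
    also have "\<dots> = real (card (B j))" by simp
    also have "\<dots> \<le> real D" using Bcard[OF j] by simp
    finally show ?thesis by (simp add: f_def)
  qed
  have S_le: "(\<Sum>j<t. \<Sum>j'<t. c j * c j' * measure_pmf.prob (blockModel n D) (A j \<inter> A j')) \<le> \<mu> * (\<mu> + real D)"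
  proof -
    have yD: "0 \<le> y^D" using ypos by simp
    have "(\<Sum>j<t. \<Sum>j'<t. c j * c j' * measure_pmf.prob (blockModel n D) (A j \<inter> A j'))
        = (\<Sum>j<t. \<Sum>j'<t. y^D * (y^D / Q (B j \<inter> B j')))"
      by (intro sum.cong refl pair) auto
    also have "\<dots> \<le> (\<Sum>j<t. \<Sum>j'<t. y^D * (y^D + (\<Sum>w\<in>B j \<inter> B j'. 1 / Delta n D (fst w))))"
      by (intro sum_mono mult_left_mono pb yD) auto
    also have "\<dots> = (\<Sum>j<t. y^D * (real t * y^D + (\<Sum>j'<t. \<Sum>w\<in>B j \<inter> B j'. 1 / Delta n D (fst w))))"
      by (simp add: sum_distrib_left[symmetric] sum.distrib)
    also have "\<dots> \<le> (\<Sum>j<t. y^D * (real t * y^D + real D))"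
      by (intro sum_mono mult_left_mono add_left_mono cnt yD) auto
    also have "\<dots> = \<mu> * (\<mu> + real D)" by (simp add: \<mu>_def)
    finally show ?thesis .
  qed
  define P where "P = measure_pmf.prob (blockModel n D) (\<Union>j<t. A j)"
  have "\<mu>^2 \<le> P * (\<Sum>j<t. \<Sum>j'<t. c j * c j' * measure_pmf.prob (blockModel n D) (A j \<inter> A j'))"
    using pz[where M="blockModel n D" and A=A and c=c and t=t] mu_eq mupos by (simp add: P_def)
  also have "\<dots> \<le> P * (\<mu> * (\<mu> + real D))"
    using S_le by (intro mult_left_mono) (simp_all add: P_def)
  finally have "\<mu>^2 \<le> P * (\<mu> * (\<mu> + real D))" .
  then have "\<mu> * \<mu> \<le> \<mu> * (P * (\<mu> + real D))" by (simp add: power2_eq_square algebra_simps)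
  then have "\<mu> \<le> P * (\<mu> + real D)" using mupos by simp
  then have Pge: "\<mu> / (\<mu> + real D) \<le> P" using mupos Dpos
    by (simp add: divide_le_eq)
  have target: "real t * real n powr (real D powr (1 - real k) - 1) * (ln (real n))^2 * l^D * l^(2*D) = \<mu>"
  proof -
    have "y^D = real n powr (real D powr (1 - real k) - 1) * (ln (real n))^2 * l^(3*D)"
      unfolding y_def L_def using y_pow[OF n1 Dpos, of k l] by (simp add: mult.assoc)
    moreover have "l^(3*D) = l^D * l^(2*D)" by (simp add: power_add[symmetric])
    ultimately show ?thesis by (simp add: \<mu>_def mult.assoc)
  qed
  have l2: "l^(2*D) \<ge> 2 * real D"
  proof -
    have "l \<le> l^(2*D)" using l2D Dpos by (intro power_increasing_iff[THEN iffD2, of l 1, simplified]) auto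
    then show ?thesis using l2D by linarith
  qed
  have fin: "min (1/4) (\<mu> / l^(2*D)) \<le> \<mu> / (\<mu> + real D)"
  proof (cases "\<mu> \<ge> real D")
    case True
    then have "1/4 \<le> \<mu> / (\<mu> + real D)" using mupos by (simp add: field_simps)
    then show ?thesis by (meson min.coboundedI1)
  next
    case False
    then have "\<mu> + real D \<le> l^(2*D)" using l2 by linarith
    then have "\<mu> / l^(2*D) \<le> \<mu> / (\<mu> + real D)" using mupos Dpos by (intro divide_left_mono) auto
    then show ?thesis by (meson min.coboundedI2)
  qed
  have lp: "l^(2*D) > 0" using lpos by simp
  have "real t * real n powr (real D powr (1 - real k) - 1) * (ln (real n))^2 * l^D = \<mu> / l^(2*D)"
    using target lp by (simp add: eq_divide_eq)
  then show ?thesis using fin Pge ev by (simp add: P_def l_def[symmetric])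
qed


theorem lemma2p7:
  fixes D :: nat
  assumes "D \<ge> 2"
  shows "\<exists>n0. \<forall>n \<ge> n0. \<forall>(t::nat) (\<B>::vtx set multiset) sb k u.
     1 \<le> t \<and> t \<le> n \<and> size \<B> = t \<and>
     validPartition n D sb \<and> wellBehaved n D sb \<B> \<and>
     1 \<le> k \<and> k \<le> numBlocks n D \<and>
     u \<in> block n D k \<and> u \<notin> \<Union>(set_mset \<B>) \<longrightarrow>
     measure_pmf.prob (blockModel n D) {\<Gamma>. \<exists>B \<in># \<B>. u \<in> commonNbr n D \<Gamma> B}
       \<ge> min (1/4) (real t * real n powr (real D powr (1 - real k) - 1)
                     * (ln (real n))^2 * (ln (ln (real n)))^D)"
proof (rule exI[of _ "nat \<lceil>exp (exp (2 * real D))\<rceil>"], intro allI impI)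
  fix n t \<B> sb k u
  assume n: "nat \<lceil>exp (exp (2 * real D))\<rceil> \<le> n"
  assume H: "1 \<le> t \<and> t \<le> n \<and> size \<B> = t \<and>
     validPartition n D sb \<and> wellBehaved n D sb \<B> \<and>
     1 \<le> k \<and> k \<le> numBlocks n D \<and>
     u \<in> block n D k \<and> u \<notin> \<Union>(set_mset (\<B>::vtx set multiset))"
  have "exp (exp (2 * real D)) \<le> real (nat \<lceil>exp (exp (2 * real D))\<rceil>)" by (rule real_nat_ceiling_ge)
  also have "\<dots> \<le> real n" using n by (rule of_nat_mono)
  finally have nb: "exp (exp (2 * real D)) \<le> real n" .
  show "measure_pmf.prob (blockModel n D) {\<Gamma>. \<exists>B \<in># \<B>. u \<in> commonNbr n D \<Gamma> B}
       \<ge> min (1/4) (real t * real n powr (real D powr (1 - real k) - 1)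
                     * (ln (real n))^2 * (ln (ln (real n)))^D)"
    using main[OF assms nb] H by blast
qed

end
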